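(* Let $G=\operatorname{SL}(V)$ with $\dim V=n\ge2$. Then: (i) $b_V$ is alternating; (ii) if $n$ is even, $b_V$ is non-degenerate and $\operatorname{Ker}\psi_V=\langle\gamma_V\rangle^\perp$; (iii) if $n$ is odd, the radical of $b_V$ is $\langle\gamma_V\rangle$ and $V\otimes V^*=\operatorname{Ker}\psi_V\oplus\langle\gamma_V\rangle$; (iv) $\langle\gamma_V\rangle^\perp/\langle\gamma_V\rangle\cong L_G(\varpi_1+\varpi_{n-1})$ as $G$-modules.
   Context: $K$ is an algebraically closed field of characteristic 2. $\psi_V:V\otimes V^*\to K$ is $\psi_V(v\otimes f)=f(v)$. The form $b_V$ on $V\otimes V^*$ is $b_V(v\otimes f,v'\otimes f')=f(v')f'(v)+f(v)f'(v')$, which is $G$-invariant. For a basis $e_1,\dots,e_n$ of $V$ with dual basis $e_i^*$, $\gamma_V=\sum_i e_i\otimes e_i^*$ (independent of the basis). Perps are with respect to $b_V$. $L_G(\lambda)$ is the irreducible rational $G$-module of highest weight $\lambda$, fundamental weights labelled as in Bourbaki. *)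

theory Defs
  imports "HOL-Analysis.Analysis" "HOL-Computational_Algebra.Polynomial"
begin

text \<open>Coordinates: V = K^n with standard basis e_i indexed by the finite
linearly ordered type 'n; V* has the dual basis e_i^*.  An element of
V \<otimes> V^* is its coefficient matrix X, i.e. X = sum_{i,j} X_ij e_i \<otimes> e_j^*.\<close>

definition char2 :: "'k::field itself \<Rightarrow> bool" where
  "char2 _ \<longleftrightarrow> (1::'k) + 1 = 0"

definition alg_closed :: "'k::field itself \<Rightarrow> bool" where
  "alg_closed _ \<longleftrightarrow> (\<forall>p::'k poly. degree p \<ge> 1 \<longrightarrow> (\<exists>x. poly p x = 0))"

text \<open>The simple tensor v \<otimes> f (f given by its coordinates in the dual basis).\<close>
definition stensor :: "'k::field^'n \<Rightarrow> 'k^'n \<Rightarrow> 'k^'n^'n" where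
  "stensor v f = (\<chi> i j. v$i * f$j)"

definition tsmult :: "'k::field \<Rightarrow> 'k^'n^'n \<Rightarrow> 'k^'n^'n" where
  "tsmult c X = (\<chi> i j. c * X$i$j)"

text \<open>psi_V: bilinear extension of psi_V(e_i \<otimes> e_j^*) = e_j^*(e_i).\<close>
definition psiV :: "'k::field^'n^'n \<Rightarrow> 'k" where
  "psiV X = (\<Sum>i\<in>UNIV. \<Sum>j\<in>UNIV. X$i$j * of_bool (i = j))"

text \<open>b_V: bilinear extension of
 b(e_i\<otimes>e_j^*, e_k\<otimes>e_l^*) = e_j^*(e_k) e_l^*(e_i) + e_j^*(e_i) e_l^*(e_k).\<close>
definition bV :: "'k::field^'n^'n \<Rightarrow> 'k^'n^'n \<Rightarrow> 'k" where
  "bV X Y = (\<Sum>i\<in>UNIV. \<Sum>j\<in>UNIV. \<Sum>k\<in>UNIV. \<Sum>l\<in>UNIV.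
      X$i$j * Y$k$l * (of_bool (j = k) * of_bool (l = i) + of_bool (j = i) * of_bool (l = k)))"

definition gammaV :: "'k::field^'n^'n" where
  "gammaV = (\<Sum>i\<in>UNIV. stensor (axis i 1) (axis i 1))"

definition span_gamma :: "('k::field^'n^'n) set" where
  "span_gamma = {tsmult c gammaV | c. True}"

definition perp :: "('k::field^'n^'n) set \<Rightarrow> ('k^'n^'n) set" where
  "perp S = {X. \<forall>Y\<in>S. bV X Y = 0}"

definition radical :: "('k::field^'n^'n) set" where
  "radical = {X. \<forall>Y. bV X Y = 0}"

definition SL :: "('k::field^'n^'n) set" where
  "SL = {g. det g = 1}"

text \<open>Action of g on V \<otimes> V^*: g.(v \<otimes> f) = gv \<otimes> (f \<circ> g^{-1}), i.e. X \<mapsto> g X g^{-1}.\<close>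
definition act :: "'k::field^'n^'n \<Rightarrow> 'k^'n^'n \<Rightarrow> 'k^'n^'n" where
  "act g X = g ** X ** matrix_inv g"

definition Gsubmodule :: "('k::field^'n^'n) set \<Rightarrow> bool" where
  "Gsubmodule S \<longleftrightarrow> 0 \<in> S \<and> (\<forall>x\<in>S. \<forall>y\<in>S. x + y \<in> S) \<and>
     (\<forall>c. \<forall>x\<in>S. tsmult c x \<in> S) \<and> (\<forall>g\<in>SL. \<forall>x\<in>S. act g x \<in> S)"

text \<open>Standard Borel: upper triangular matrices; its unipotent radical and the
diagonal maximal torus of SL(V).\<close>
definition unitri :: "('k::field^('n::{finite,linorder})^('n::{finite,linorder})) set" where
  "unitri = {u. (\<forall>i. u$i$i = 1) \<and> (\<forall>i j. j < i \<longrightarrow> u$i$j = 0)}"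

definition torus :: "('k::field^'n^'n) set" where
  "torus = {t \<in> SL. \<forall>i j. i \<noteq> j \<longrightarrow> t$i$j = 0}"

text \<open>The weight \<varpi>_1 + \<varpi>_{n-1}: diag(t_1,...,t_n) \<mapsto> t_1 t_n^{-1}.\<close>
definition weight_w1_wn1 :: "'k::field^('n::{finite,linorder})^('n::{finite,linorder}) \<Rightarrow> 'k" where
  "weight_w1_wn1 t = t$(Min UNIV)$(Min UNIV) * inverse (t$(Max UNIV)$(Max UNIV))"

text \<open>The G-module W/U (U \<subseteq> W G-submodules) is the irreducible module L_G(\<lambda>):
it is nonzero and irreducible (no G-submodule strictly between U and W),
and has a highest weight vector of weight \<lambda> (a vector fixed by the unipotent
radical of the Borel on which the torus acts by \<lambda>).\<close>
definition subquot_is_L :: "('k::field^('n::{finite,linorder})^('n::{finite,linorder})) set \<Rightarrow> ('k^('n::{finite,linorder})^('n::{finite,linorder})) set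
     \<Rightarrow> ('k^('n::{finite,linorder})^('n::{finite,linorder}) \<Rightarrow> 'k) \<Rightarrow> bool" where
  "subquot_is_L U W wt \<longleftrightarrow> Gsubmodule U \<and> Gsubmodule W \<and> U \<subset> W \<and>
     (\<forall>S. Gsubmodule S \<and> U \<subseteq> S \<and> S \<subseteq> W \<longrightarrow> S = U \<or> S = W) \<and>
     (\<exists>v\<in>W. v \<notin> U \<and> (\<forall>u\<in>unitri. act u v - v \<in> U) \<and>
        (\<forall>t\<in>torus. act t v - tsmult (wt t) v \<in> U))"

end

theory Submission
  imports Defs
begin


lemma mob1: "(x::'a::semiring_1) * of_bool P = (if P then x else 0)" by simp
lemma mob2: "of_bool P * (x::'a::semiring_1) = (if P then x else 0)" by simp
lemma ifconj: "(if P \<and> Q then x else 0) = (if P then if Q then x else 0 else 0)" by simp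
lemma mif1: "(if P then (a::'a::semiring_1) else 0) * b = (if P then a * b else 0)" by simp
lemma mif2: "b * (if P then (a::'a::semiring_1) else 0) = (if P then b * a else 0)" by simp
lemma sum_ifc: "(\<Sum>k\<in>A. if P then f k else 0) = (if P then sum f A else 0)" by simp

lemma bV_alt: "bV X Y = (\<Sum>i\<in>UNIV. \<Sum>j\<in>UNIV. X$i$j * Y$j$i) + trace X * trace Y"
proof -
  have "bV X Y = (\<Sum>i\<in>UNIV. \<Sum>j\<in>UNIV. \<Sum>k\<in>UNIV. \<Sum>l\<in>UNIV.
      X$i$j * Y$k$l * of_bool (j = k) * of_bool (l = i)) + (\<Sum>i\<in>UNIV. \<Sum>j\<in>UNIV. \<Sum>k\<in>UNIV. \<Sum>l\<in>UNIV.
      X$i$j * Y$k$l * of_bool (j = i) * of_bool (l = k))"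
    unfolding bV_def by (simp add: distrib_left sum.distrib mult.assoc)
  also have "\<dots> = (\<Sum>i\<in>UNIV. \<Sum>j\<in>UNIV. X$i$j * Y$j$i) + trace X * trace Y"
    unfolding trace_def by (simp only: mob1 sum.delta' sum.delta if_True finite UNIV_I sum_product) 
      (simp add: sum.delta sum_ifc sum_distrib_left)
  finally show ?thesis .
qed

lemma bV_sym: "bV X Y = bV Y X"
  unfolding bV_alt by (subst sum.swap) (simp add: mult.commute)

lemma c2: "char2 TYPE('k::field) \<Longrightarrow> (x::'k) + x = 0"
  unfolding char2_def by (metis distrib_left mult.right_neutral mult_zero_right)

lemma c2m: "char2 TYPE('k::field) \<Longrightarrow> - (x::'k) = x"
  using c2[of x] by (metis add_eq_0_iff)

lemma c2nat: "char2 TYPE('k::field) \<Longrightarrow> (of_nat n::'k) = (if even n then 0 else 1)"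
proof (induction n)
  case 0 then show ?case by simp
next
  case (Suc n) then show ?case using c2[OF Suc.prems, of 1] by (auto simp: add.commute)
qed

lemma symsum:
  assumes c: "char2 TYPE('k::field)" and fin: "finite A" and sym: "\<And>i j. f i j = f j i"
  shows "(\<Sum>i\<in>A. \<Sum>j\<in>A. (f i j::'k)) = (\<Sum>i\<in>A. f i i)"
  using fin
proof (induction A rule: finite_induct)
  case empty then show ?case by simp
next
  case (insert a A)
  have "(\<Sum>i\<in>insert a A. \<Sum>j\<in>insert a A. f i j) =
     f a a + (\<Sum>j\<in>A. f a j) + ((\<Sum>i\<in>A. f i a) + (\<Sum>i\<in>A. \<Sum>j\<in>A. f i j))"
    using insert by (simp add: sum.distrib)
  also have "(\<Sum>i\<in>A. f i a) = (\<Sum>j\<in>A. f a j)" using sym by simp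
  finally show ?case using insert c2[OF c, of "\<Sum>j\<in>A. f a j"]
    by (simp add: algebra_simps)
qed

lemma psiV_trace: "psiV X = trace X"
  unfolding psiV_def trace_def by (simp add: mob1 sum.delta')

lemma gammaV_I: "gammaV = mat 1"
  unfolding gammaV_def stensor_def by (simp add: vec_eq_iff mat_def axis_def mif1 sum.delta)

definition Em :: "'n::finite \<Rightarrow> 'n \<Rightarrow> 'k::field^'n^'n" where
  "Em p q = (\<chi> r s. if r = p \<and> s = q then 1 else 0)"

lemma trace_Em: "trace (Em p q) = (if p = q then 1 else 0)"
  unfolding trace_def Em_def by (simp add: ifconj sum.delta)

lemma bV_E: "bV X (Em q p) = X$p$q + trace X * (if p = q then 1 else 0)"
  unfolding bV_alt trace_Em by (simp add: Em_def mif2 ifconj sum.delta sum_ifc)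

lemma trace_tsmult: "trace (tsmult c X) = c * trace X"
  unfolding trace_def tsmult_def by (simp add: sum_distrib_left)

lemma bV_scal: "bV X (tsmult c (mat 1)) = c * trace X * (1 + of_nat CARD('n))"
  for X :: "'k::field^'n::finite^'n"
  unfolding bV_alt trace_tsmult trace_I by (simp add: tsmult_def mat_def trace_def mif2 sum.delta sum_ifc sum_distrib_left sum.distrib algebra_simps)

lemma rad_entries:
  fixes X :: "'k::field^'n::finite^'n"
  assumes c: "char2 TYPE('k)" and r: "\<forall>Y. bV X Y = 0"
  shows "X$p$q = (if p = q then trace X else (0::'k))"
  using r[rule_format, of "Em q p"] c2m[OF c] unfolding bV_E
  by (auto split: if_splits simp: add_eq_0_iff)

lemma partI: assumes c: "char2 TYPE('k::field)" shows "bV X X = (0::'k)"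
proof -
  have 1: "(\<Sum>i\<in>UNIV. \<Sum>j\<in>UNIV. X$i$j * X$j$i) = (\<Sum>i\<in>UNIV. X$i$i * X$i$i)"
    by (rule symsum[OF c]) (auto simp: mult.commute)
  have 2: "trace X * trace X = (\<Sum>i\<in>UNIV. X$i$i * X$i$i)"
    unfolding trace_def sum_product by (rule symsum[OF c]) (auto simp: mult.commute)
  show ?thesis unfolding bV_alt 1 2 by (rule c2[OF c])
qed

lemma perp_sg: "perp (span_gamma::('k::field^'n::finite^'n) set) = {X. trace X * (1 + of_nat CARD('n)) = 0}"
proof -
  have "(\<forall>c. c * t * m = 0) \<longleftrightarrow> t * m = (0::'k)" for t m
    by (metis mult_1 mult.assoc mult_zero_right)
  then show ?thesis
    unfolding perp_def span_gamma_def gammaV_I by (auto simp: bV_scal)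
qed

lemma trace_const: "trace (\<chi> i j. if i = j then c else 0 :: 'k::field^'n::finite^'n) = of_nat CARD('n) * c"
  by (simp add: trace_def)

lemma rad_scalar:
  fixes X :: "'k::field^'n::finite^'n"
  assumes c: "char2 TYPE('k)" and r: "\<forall>Y. bV X Y = 0"
  shows "X = tsmult (trace X) (mat 1)"
  using rad_entries[OF c r] by (simp add: vec_eq_iff tsmult_def mat_def)

lemma partII:
  assumes c: "char2 TYPE('k::field)" and e: "even CARD('n::finite)"
  shows "(\<forall>X::'k^'n^'n. (\<forall>Y. bV X Y = 0) \<longrightarrow> X = 0) \<and>
         {X::'k^'n^'n. psiV X = 0} = perp span_gamma"
proof
  have n0: "(of_nat CARD('n)::'k) = 0" using c2nat[OF c] e by simp
  show "\<forall>X::'k^'n^'n. (\<forall>Y. bV X Y = 0) \<longrightarrow> X = 0"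
  proof (intro allI impI)
    fix X :: "'k^'n^'n" assume r: "\<forall>Y. bV X Y = 0"
    have "trace X = trace (tsmult (trace X) (mat 1::'k^'n^'n))" using rad_scalar[OF c r] by simp
    also have "\<dots> = 0" by (simp add: trace_tsmult trace_I n0)
    finally show "X = 0" using rad_scalar[OF c r] by (simp add: vec_eq_iff tsmult_def)
  qed
  show "{X::'k^'n^'n. psiV X = 0} = perp span_gamma"
    unfolding perp_sg psiV_trace n0 by simp
qed

lemma partIII:
  assumes c: "char2 TYPE('k::field)" and o: "odd CARD('n::finite)"
  shows "(radical :: ('k^'n^'n) set) = span_gamma \<and>
         {X::'k^'n^'n. psiV X = 0} \<inter> span_gamma = {0} \<and>
         (\<forall>Z::'k^'n^'n. \<exists>X Y. psiV X = 0 \<and> Y \<in> span_gamma \<and> Z = X + Y)"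
proof (intro conjI)
  have n1: "(of_nat CARD('n)::'k) = 1" using c2nat[OF c] o by simp
  have n2: "(1 + of_nat CARD('n)::'k) = 0" using n1 c2[OF c, of 1] by simp
  show "(radical :: ('k^'n^'n) set) = span_gamma"
  proof
    show "(radical :: ('k^'n^'n) set) \<subseteq> span_gamma"
      unfolding radical_def span_gamma_def gammaV_I using rad_scalar[OF c] by blast
    show "span_gamma \<subseteq> (radical :: ('k^'n^'n) set)"
      unfolding radical_def span_gamma_def gammaV_I
    proof clarify
      fix c and Y :: "'k^'n^'n"
      show "bV (tsmult c (mat 1)) Y = 0" by (subst bV_sym) (simp add: bV_scal n2)
    qed
  qed
  show "{X::'k^'n^'n. psiV X = 0} \<inter> span_gamma = {0}"
  proof -
    have "tsmult c (mat 1) = (0::'k^'n^'n) \<longleftrightarrow> c = 0" for c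
      by (auto simp: tsmult_def vec_eq_iff mat_def)
    moreover have "trace (tsmult c (mat 1::'k^'n^'n)) = c" for c
      by (simp add: trace_tsmult trace_I n1)
    ultimately show ?thesis unfolding span_gamma_def gammaV_I psiV_trace
      by auto (metis (no_types))
  qed
  show "\<forall>Z::'k^'n^'n. \<exists>X Y. psiV X = 0 \<and> Y \<in> span_gamma \<and> Z = X + Y"
  proof
    fix Z :: "'k^'n^'n"
    let ?Y = "tsmult (trace Z) (mat 1) :: 'k^'n^'n"
    have "psiV (Z - ?Y) = 0" unfolding psiV_trace trace_sub trace_tsmult trace_I n1 by simp
    moreover have "?Y \<in> span_gamma" unfolding span_gamma_def gammaV_I by blast
    ultimately show "\<exists>X Y. psiV X = 0 \<and> Y \<in> span_gamma \<and> Z = X + Y" by force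
  qed
qed

lemma inv_props:
  fixes A :: "'k::field^'n::finite^'n"
  assumes "det A \<noteq> 0"
  shows "A ** matrix_inv A = mat 1 \<and> matrix_inv A ** A = mat 1"
proof -
  have "invertible A" using invertible_det_nz assms by blast
  then show ?thesis unfolding invertible_def matrix_inv_def by (rule someI_ex)
qed

lemma inv_eq:
  fixes A :: "'k::field^'n::finite^'n"
  assumes "A ** B = mat 1" "B ** A = mat 1"
  shows "matrix_inv A = B"
proof -
  let ?C = "matrix_inv A"
  have C: "A ** ?C = mat 1 \<and> ?C ** A = mat 1"
    unfolding matrix_inv_def by (rule someI[of _ B]) (use assms in blast)
  have "?C = ?C ** (A ** B)" using assms by simp
  also have "\<dots> = B" using C by (simp add: matrix_mul_assoc)
  finally show ?thesis .
qed

lemma mult_tsmult: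
  "A ** tsmult c B = tsmult c (A ** B)" "tsmult c A ** B = tsmult c (A ** B)"
  for A B :: "'k::field^'n::finite^'n"
  by (simp_all add: vec_eq_iff matrix_matrix_mult_def tsmult_def sum_distrib_left algebra_simps)

lemma act_scalar:
  fixes g :: "'k::field^'n::finite^'n"
  assumes "det g \<noteq> 0"
  shows "act g (tsmult c (mat 1)) = tsmult c (mat 1)"
  unfolding act_def using inv_props[OF assms] by (simp add: mult_tsmult)

lemma trace_act:
  fixes g :: "'k::field^'n::finite^'n"
  assumes "det g \<noteq> 0"
  shows "trace (act g X) = trace X"
proof -
  have "trace (act g X) = trace (matrix_inv g ** (g ** X))"
    unfolding act_def by (rule trace_mul_sym)
  also have "\<dots> = trace X" using inv_props[OF assms] by (simp add: matrix_mul_assoc)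
  finally show ?thesis .
qed

lemma Gsub_U: "Gsubmodule (span_gamma :: ('k::field^'n::finite^'n) set)"
  unfolding Gsubmodule_def span_gamma_def gammaV_I
proof (intro conjI ballI allI)
  show "(0::'k^'n^'n) \<in> {tsmult c (mat 1) |c. True}"
    by (rule CollectI, rule exI[of _ 0]) (simp add: vec_eq_iff tsmult_def)
  fix x y :: "'k^'n^'n" assume "x \<in> {tsmult c (mat 1) |c. True}" "y \<in> {tsmult c (mat 1) |c. True}"
  then obtain a b where "x = tsmult a (mat 1)" "y = tsmult b (mat 1)" by blast
  then show "x + y \<in> {tsmult c (mat 1) |c. True}"
    by (intro CollectI exI[of _ "a+b"]) (simp add: vec_eq_iff tsmult_def algebra_simps)
next
  fix c and x :: "'k^'n^'n" assume "x \<in> {tsmult c (mat 1) |c. True}"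
  then obtain a where "x = tsmult a (mat 1)" by blast
  then show "tsmult c x \<in> {tsmult c (mat 1) |c. True}"
    by (intro CollectI exI[of _ "c*a"]) (simp add: vec_eq_iff tsmult_def algebra_simps)
next
  fix g x :: "'k^'n^'n" assume g: "g \<in> SL" and "x \<in> {tsmult c (mat 1) |c. True}"
  then obtain a where "x = tsmult a (mat 1)" by blast
  moreover have "det g \<noteq> 0" using g by (simp add: SL_def)
  ultimately show "act g x \<in> {tsmult c (mat 1) |c. True}" using act_scalar by auto
qed

lemma Gsub_W: "Gsubmodule {X :: 'k::field^'n::finite^'n. trace X * m = 0}"
  unfolding Gsubmodule_def
  by (auto simp: trace_add trace_tsmult trace_act SL_def algebra_simps trace_def[of 0])

lemma lin: "Gsubmodule S \<Longrightarrow> x \<in> S \<Longrightarrow> y \<in> S \<Longrightarrow> tsmult a x + tsmult b y \<in> S"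
  unfolding Gsubmodule_def by blast

lemma sumS: assumes "Gsubmodule S" "finite A" "\<forall>x\<in>A. f x \<in> S" shows "sum f A \<in> S"
  using assms(2,3)
proof (induction A rule: finite_induct)
  case empty then show ?case using assms(1) unfolding Gsubmodule_def by simp
next
  case (insert a A) then show ?case using assms(1) unfolding Gsubmodule_def by simp
qed

definition xm :: "'n::finite \<Rightarrow> 'n \<Rightarrow> 'k::field \<Rightarrow> 'k^'n^'n" where
  "xm i j a = (\<chi> p q. (if p = q then 1 else 0) + (if p = i \<and> q = j then a else 0))"

lemma xm_left: "(xm i j a ** X)$p$q = X$p$q + (if p = i then a * X$j$q else 0)"
  by (simp add: xm_def matrix_matrix_mult_def distrib_left distrib_right sum.distrib mif1 mif2 ifconj sum.delta sum_ifc)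

lemma xm_right: "(X ** xm i j a)$p$q = X$p$q + (if q = j then a * X$p$i else 0)"
  by (simp add: xm_def matrix_matrix_mult_def distrib_left distrib_right sum.distrib mif1 mif2 ifconj sum.delta sum.delta' sum_ifc)

lemma xm_mult: "i \<noteq> j \<Longrightarrow> xm i j a ** xm i j b = xm i j (a + b)"
  by (simp add: vec_eq_iff xm_left) (auto simp: xm_def algebra_simps)

lemma xm_0: "xm i j 0 = mat 1"
  by (simp add: vec_eq_iff xm_def mat_def)

lemma det_xm: "i \<noteq> j \<Longrightarrow> det (xm i j a :: 'k::field^'n::finite^'n) = 1"
proof -
  assume ij: "i \<noteq> j"
  have e: "(xm i j a :: 'k::field^'n::finite^'n) = (\<chi> k. if k = i then row i (mat 1) + a *s row j (mat 1) else row k (mat 1))"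
    using ij by (auto simp: vec_eq_iff xm_def row_def mat_def vector_scalar_mult_def)
  have "det (xm i j a :: 'k::field^'n::finite^'n) = det (mat 1 :: 'k^'n^'n)"
    by (subst e) (rule det_row_operation[OF ij])
  then show ?thesis by simp
qed

lemma inv_xm: "i \<noteq> j \<Longrightarrow> matrix_inv (xm i j a) = xm i j (-a)"
  by (rule inv_eq) (simp_all add: xm_mult xm_0)

definition Aop :: "'n::finite \<Rightarrow> 'n \<Rightarrow> 'k::field^'n^'n \<Rightarrow> 'k^'n^'n" where
  "Aop i j X = (\<chi> p q. (if p = i then X$j$q else 0) - (if q = j then X$p$i else 0))"
definition Bop :: "'n::finite \<Rightarrow> 'n \<Rightarrow> 'k::field^'n^'n \<Rightarrow> 'k^'n^'n" where
  "Bop i j X = (\<chi> p q. (if p = i \<and> q = j then - X$j$i else 0))"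

lemma act_xm: "i \<noteq> j \<Longrightarrow> act (xm i j a) X = X + tsmult a (Aop i j X) + tsmult (a^2) (Bop i j X)"
  unfolding act_def inv_xm
  by (auto simp: vec_eq_iff xm_left xm_right tsmult_def Aop_def Bop_def algebra_simps power2_eq_square)

lemma key:
  fixes X :: "'k::field^'n::finite^'n" and w :: 'k
  assumes G: "Gsubmodule S" and X: "X \<in> S" and ij: "i \<noteq> j" and w: "w \<noteq> 0" "w \<noteq> 1"
  shows "Aop i j X \<in> S \<and> Bop i j X \<in> S"
proof -
  have SL: "xm i j a \<in> SL" for a using det_xm[OF ij] by (simp add: SL_def)
  have P: "act (xm i j a) X \<in> S" for a using G X SL unfolding Gsubmodule_def by blast
  have R1: "tsmult 1 (act (xm i j 1) X) + tsmult (-1) X \<in> S" by (rule lin[OF G P X])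
  have R2: "tsmult 1 (act (xm i j w) X) + tsmult (-1) X \<in> S" by (rule lin[OF G P X])
  define D where "D = w - w^2"
  have d: "D \<noteq> 0" using w unfolding D_def by (simp add: power2_eq_square right_diff_distrib[symmetric])
  have w2: "w^2 = w - D" unfolding D_def by simp
  have B: "Bop i j X = tsmult (w/D) (tsmult 1 (act (xm i j 1) X) + tsmult (-1) X)
      + tsmult (-1/D) (tsmult 1 (act (xm i j w) X) + tsmult (-1) X)"
    unfolding act_xm[OF ij] w2 using d
    by (simp add: vec_eq_iff tsmult_def field_simps)
  have BS: "Bop i j X \<in> S" unfolding B by (rule lin[OF G R1 R2])
  have A: "Aop i j X = tsmult 1 (tsmult 1 (act (xm i j 1) X) + tsmult (-1) X) + tsmult (-1) (Bop i j X)"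
    unfolding act_xm[OF ij] by (simp add: vec_eq_iff tsmult_def)
  have "Aop i j X \<in> S" unfolding A by (rule lin[OF G R1 BS])
  with BS show ?thesis by blast
qed

lemma scal: "Gsubmodule S \<Longrightarrow> x \<in> S \<Longrightarrow> tsmult c x \<in> S"
  unfolding Gsubmodule_def by blast

locale irr =
  fixes S :: "('k::field^'n::finite^'n) set" and w :: 'k
  assumes G: "Gsubmodule S" and w: "w \<noteq> 0" "w \<noteq> 1"
begin

lemma keyA: "X \<in> S \<Longrightarrow> i \<noteq> j \<Longrightarrow> Aop i j X \<in> S"
  using key[OF G _ _ w] by blast
lemma keyB: "X \<in> S \<Longrightarrow> i \<noteq> j \<Longrightarrow> Bop i j X \<in> S"
  using key[OF G _ _ w] by blast

lemma offdiag_E: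
  assumes X: "X \<in> S" and ab: "a \<noteq> b" and nz: "X$a$b \<noteq> 0"
  shows "Em b a \<in> S"
proof -
  have "Em b a = tsmult (-1/X$a$b) (Bop b a X)"
    using nz by (auto simp: vec_eq_iff Em_def tsmult_def Bop_def)
  then show ?thesis using scal[OF G keyB[OF X ab[symmetric]]] by simp
qed

lemma diag_E:
  assumes X: "X \<in> S" and ab: "a \<noteq> b" and od: "\<And>p q. p \<noteq> q \<Longrightarrow> X$p$q = 0"
    and nz: "X$a$a \<noteq> X$b$b"
  shows "Em a b \<in> S"
proof -
  have "Em a b = tsmult (1/(X$b$b - X$a$a)) (Aop a b X)"
    using nz ab od by (auto simp: vec_eq_iff Em_def tsmult_def Aop_def)
  then show ?thesis using scal[OF G keyA[OF X ab]] by simp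
qed

lemma sB: "Em a b \<in> S \<Longrightarrow> a \<noteq> b \<Longrightarrow> Em b a \<in> S"
  by (rule offdiag_E) (auto simp: Em_def)

lemma sL:
  assumes "Em a b \<in> S" "a \<noteq> b" "i \<noteq> b" "i \<noteq> a"
  shows "Em i b \<in> S"
proof -
  have "Em i b = Aop i a (Em a b)" using assms by (auto simp: vec_eq_iff Em_def Aop_def)
  then show ?thesis using keyA[OF assms(1) assms(4)] by metis
qed

lemma sR:
  assumes "Em a b \<in> S" "a \<noteq> b" "j \<noteq> a" "j \<noteq> b"
  shows "Em a j \<in> S"
proof -
  have "Em a j = tsmult (-1) (Aop b j (Em a b))" using assms by (auto simp: vec_eq_iff Em_def Aop_def tsmult_def)
  moreover have "tsmult (-1) (Aop b j (Em a b)) \<in> S" using scal[OF G keyA[OF assms(1)]] assms(4) by metis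
  ultimately show ?thesis by metis
qed

lemma allE:
  assumes E: "Em a b \<in> S" and ab: "a \<noteq> b" and pq: "p \<noteq> q"
  shows "Em p q \<in> S"
proof (cases "q = a")
  case False
  have aq: "Em a q \<in> S" using E ab False sR[OF E ab, of q] by (cases "q = b") auto
  show ?thesis using aq sL[OF aq, of p] False pq by (cases "p = a") auto
next
  case True
  have ba: "Em b a \<in> S" by (rule sB[OF E ab])
  show ?thesis using ba sL[OF ba, of p] True pq ab by (cases "p = b") auto
qed

lemma diagE:
  assumes "Em p q \<in> S" "p \<noteq> q"
  shows "Em q q + tsmult (-1) (Em p p) \<in> S"
proof -
  have "Em q q + tsmult (-1) (Em p p) = Aop q p (Em p q)" using assms
    by (auto simp: vec_eq_iff Em_def Aop_def tsmult_def)
  then show ?thesis using keyA[OF assms(1)] assms(2) by metis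
qed

end

lemma decomp:
  fixes Z :: "'k::field^'n::finite^'n"
  assumes t: "trace Z = 0"
  shows "Z = (\<Sum>p\<in>UNIV. \<Sum>q\<in>UNIV-{p}. tsmult (Z$p$q) (Em p q))
           + (\<Sum>p\<in>UNIV. tsmult (Z$p$p) (Em p p + tsmult (-1) (Em m m)))"
proof -
  have 1: "(\<Sum>p\<in>UNIV. \<Sum>q\<in>UNIV-{p}. tsmult (Z$p$q) (Em p q))$r$s = (if r = s then 0 else Z$r$s)" for r s
    by (simp add: tsmult_def Em_def mif2 ifconj sum.delta sum_ifc)
  have 2: "(\<Sum>p\<in>UNIV. tsmult (Z$p$p) (Em p p + tsmult (-1) (Em m m)))$r$s = (if r = s then Z$r$r else 0) - (if r = m \<and> s = m then trace Z else 0)" for r s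
    by (simp add: tsmult_def Em_def distrib_left sum.distrib mif2 ifconj sum.delta sum_ifc sum_subtractf sum_negf trace_def)
  show ?thesis unfolding vec_eq_iff vector_add_component 1 2 using t by simp
qed

lemma tsmult_one: "tsmult 1 x = x"
  by (simp add: vec_eq_iff tsmult_def)

lemma irreducible:
  fixes S :: "('k::field^'n::finite^'n) set" and w :: 'k
  assumes c: "char2 TYPE('k)" and w: "w \<noteq> 0" "w \<noteq> 1" and G: "Gsubmodule S"
    and US: "span_gamma \<subseteq> S" and SW: "S \<subseteq> perp span_gamma" and ne: "S \<noteq> span_gamma"
  shows "S = perp span_gamma"
proof -
  interpret irr S w using G w by unfold_locales auto
  obtain X where X: "X \<in> S" "X \<notin> span_gamma" using US ne by blast
  have "\<exists>a b. a \<noteq> b \<and> Em a b \<in> S"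
  proof (cases "\<exists>a b. a \<noteq> b \<and> X$a$b \<noteq> 0")
    case True
    then obtain a b where "a \<noteq> b" "X$a$b \<noteq> 0" by blast
    then show ?thesis using offdiag_E[OF X(1)] by metis
  next
    case False
    then have od: "\<And>p q. p \<noteq> q \<Longrightarrow> X$p$q = 0" by blast
    show ?thesis
    proof (cases "\<exists>a b. X$a$a \<noteq> X$b$b")
      case True
      then obtain a b where ab: "X$a$a \<noteq> X$b$b" by blast
      then have "a \<noteq> b" by blast
      then show ?thesis using diag_E[OF X(1) _ od ab] by blast
    next
      case False
      fix m :: 'n
      have "X = tsmult (X$m$m) (mat 1)"
        using False od by (auto simp: vec_eq_iff tsmult_def mat_def)
      then have "X \<in> span_gamma" unfolding span_gamma_def gammaV_I by blast
      with X show ?thesis by blast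
    qed
  qed
  then obtain a b where ab: "a \<noteq> b" "Em a b \<in> S" by blast
  have Eall: "Em p q \<in> S" if "p \<noteq> q" for p q using allE[OF ab(2) ab(1) that] .
  have zS: "0 \<in> S" using G unfolding Gsubmodule_def by blast
  show ?thesis
  proof
    show "S \<subseteq> perp span_gamma" by (rule SW)
    show "perp span_gamma \<subseteq> S"
    proof
      fix Y :: "'k^'n^'n" assume "Y \<in> perp span_gamma"
      then have tY: "trace Y * (1 + of_nat CARD('n)) = 0" unfolding perp_sg by simp
      define c0 where "c0 = (if odd CARD('n) then trace Y else 0)"
      define Z where "Z = Y + tsmult (-c0) (mat 1)"
      have tZ: "trace Z = 0"
      proof (cases "odd CARD('n)")
        case True
        then have "(of_nat CARD('n)::'k) = 1" using c2nat[OF c] by simp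
        then show ?thesis unfolding Z_def c0_def using True by (simp add: trace_add trace_tsmult trace_I)
      next
        case False
        then have "(of_nat CARD('n)::'k) = 0" using c2nat[OF c] by simp
        then show ?thesis unfolding Z_def c0_def using False tY
          by (simp add: trace_add trace_tsmult trace_I)
      qed
      have s1: "(\<Sum>p\<in>UNIV. \<Sum>q\<in>UNIV-{p}. tsmult (Z$p$q) (Em p q)) \<in> S"
        by (intro sumS[OF G] ballI) (auto intro: scal[OF G] Eall)
      have dS: "Em p p + tsmult (-1) (Em a a) \<in> S" for p
      proof (cases "p = a")
        case True
        then have "Em p p + tsmult (-1) (Em a a) = (0::'k^'n^'n)" by (simp add: vec_eq_iff tsmult_def)
        then show ?thesis using zS by simp
      next
        case False
        then show ?thesis using diagE[OF Eall[of a p]] by auto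
      qed
      have s2: "(\<Sum>p\<in>UNIV. tsmult (Z$p$p) (Em p p + tsmult (-1) (Em a a))) \<in> S"
        by (intro sumS[OF G] ballI scal[OF G] dS) auto
      have ZS: "Z \<in> S"
        apply (subst decomp[OF tZ, of a])
        using lin[OF G s1 s2, of 1 1] unfolding tsmult_one .
      have cS: "tsmult c0 (mat 1) \<in> S" using US unfolding span_gamma_def gammaV_I by blast
      have "Y = tsmult 1 Z + tsmult 1 (tsmult c0 (mat 1))"
        unfolding Z_def by (simp add: vec_eq_iff tsmult_def)
      then show "Y \<in> S" using lin[OF G ZS cS] by metis
    qed
  qed
qed

lemma perm_ge_id:
  fixes p :: "'n::{finite,linorder} \<Rightarrow> 'n"
  assumes p: "p permutes UNIV" and ge: "\<And>i. i \<le> p i"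
  shows "p = id"
proof (rule ccontr)
  assume "p \<noteq> id"
  then have ne: "{i. p i \<noteq> i} \<noteq> {}" by auto
  define i where "i = Max {i. p i \<noteq> i}"
  have i: "p i \<noteq> i" using Max_in[OF _ ne] unfolding i_def by auto
  then have lt: "i < p i" using ge[of i] by simp
  have "p (p i) = p i"
  proof (rule ccontr)
    assume "p (p i) \<noteq> p i"
    then have "p i \<le> i" unfolding i_def by (intro Max_ge) auto
    with lt show False by simp
  qed
  then have "p i = i" using permutes_inj[OF p] by (metis injD)
  with i show False by simp
qed

lemma det_upper:
  fixes A :: "'a::comm_ring_1^'n::{finite,linorder}^'n::{finite,linorder}"
  assumes ld: "\<And>i j. i > j \<Longrightarrow> A$i$j = 0"
  shows "det A = prod (\<lambda>i. A$i$i) (UNIV:: 'n set)"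
proof -
  let ?U = "UNIV:: 'n set"
  let ?PU = "{p. p permutes ?U}"
  let ?pp = "(\<lambda>p. of_int (sign p) * prod (\<lambda>i. A$i$p i) (UNIV :: 'n set))"
  have fU: "finite ?U"
    by simp
  have id0: "{id} \<subseteq> ?PU"
    by (auto simp: permutes_id)
  have p0: "\<forall>p \<in> ?PU -{id}. ?pp p = 0"
  proof
    fix p
    assume p: "p \<in> ?PU - {id}"
    have "\<not> (\<forall>i. i \<le> p i)" using perm_ge_id[of p] p by blast
    then obtain i where i: "p i < i" by (auto simp: not_le)
    from ld[OF i] have "\<exists>i \<in> ?U. A$i$p i = 0"
      by blast
    with prod_zero[OF fU]  show "?pp p = 0"
      by force
  qed
  from sum.mono_neutral_cong_left[OF finite_permutations[OF fU] id0 p0] show ?thesis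
    unfolding det_def by (simp add: sign_id)
qed

lemma minmax:
  assumes "CARD('n::{finite,linorder}) \<ge> 2"
  shows "Min (UNIV::'n set) < Max UNIV"
proof (rule ccontr)
  assume a: "\<not> Min (UNIV::'n set) < Max UNIV"
  have "\<forall>x::'n. x = Min UNIV"
  proof
    fix x :: 'n
    have "Min UNIV \<le> x" "x \<le> Max UNIV" by simp_all
    then show "x = Min UNIV" using a by (meson antisym not_less order_trans)
  qed
  then have "(UNIV::'n set) \<subseteq> {Min UNIV}" by blast
  then have "card (UNIV::'n set) \<le> card {Min (UNIV::'n set)}" by (intro card_mono) auto
  with assms show False by simp
qed

lemma hw_unitri:
  fixes u :: "'k::field^('n::{finite,linorder})^('n::{finite,linorder})"
  assumes u: "u \<in> unitri" and mm: "Min (UNIV::'n set) < Max UNIV"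
  shows "act u (Em (Min UNIV) (Max UNIV)) = Em (Min UNIV) (Max UNIV)"
proof -
  let ?v = "Em (Min UNIV) (Max UNIV) :: 'k^('n::{finite,linorder})^('n::{finite,linorder})"
  have u1: "u$i$i = 1" "\<And>j. j < i \<Longrightarrow> u$i$j = 0" for i using u unfolding unitri_def by auto
  have uv: "u ** ?v = ?v"
  proof -
    have "u$p$(Min UNIV) = (if p = Min UNIV then 1 else 0)" for p
      using u1 by (cases "p = Min UNIV") (auto simp: order_less_le)
    then show ?thesis
      by (simp add: vec_eq_iff matrix_matrix_mult_def Em_def mif2 ifconj sum.delta' sum.delta sum_ifc)
  qed
  have vu: "?v ** u = ?v"
  proof -
    have "u$(Max UNIV)$q = (if q = Max UNIV then 1 else 0)" for q
      using u1 by (cases "q = Max UNIV") (auto simp: order_less_le)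
    then show ?thesis
      by (simp add: vec_eq_iff matrix_matrix_mult_def Em_def mif1 ifconj sum.delta' sum.delta sum_ifc)
  qed
  have "det u = 1" by (subst det_upper) (auto simp: u1)
  then have inv: "u ** matrix_inv u = mat 1" using inv_props by force
  have "act u ?v = ?v ** matrix_inv u" unfolding act_def uv ..
  also have "\<dots> = (?v ** u) ** matrix_inv u" unfolding vu ..
  also have "\<dots> = ?v" by (simp add: matrix_mul_assoc[symmetric] inv)
  finally show ?thesis .
qed

lemma hw_torus:
  fixes t :: "'k::field^('n::{finite,linorder})^('n::{finite,linorder})"
  assumes t: "t \<in> torus"
  shows "act t (Em (Min UNIV) (Max UNIV)) = tsmult (weight_w1_wn1 t) (Em (Min UNIV) (Max UNIV))"
proof -
  let ?v = "Em (Min UNIV) (Max UNIV) :: 'k^('n::{finite,linorder})^('n::{finite,linorder})"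
  let ?a = "t$(Min UNIV)$(Min UNIV)" and ?b = "t$(Max UNIV)$(Max UNIV)"
  have od: "\<And>i j. i \<noteq> j \<Longrightarrow> t$i$j = 0" and dt: "det t = 1"
    using t unfolding torus_def SL_def by auto
  have "prod (\<lambda>i. t$i$i) UNIV = 1" using dt det_diagonal[of t] od by simp
  then have b0: "?b \<noteq> 0" by (metis UNIV_I finite prod_zero_iff zero_neq_one)
  have tv: "t ** ?v = tsmult ?a ?v"
    using od by (auto simp: vec_eq_iff matrix_matrix_mult_def Em_def tsmult_def mif2 ifconj sum.delta' sum.delta sum_ifc)
  have vt: "?v ** t = tsmult ?b ?v"
    using od by (auto simp: vec_eq_iff matrix_matrix_mult_def Em_def tsmult_def mif1 ifconj sum.delta' sum.delta sum_ifc)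
  have inv: "t ** matrix_inv t = mat 1" using inv_props dt by force
  have "?v = ?v ** (t ** matrix_inv t)" using inv by simp
  also have "\<dots> = tsmult ?b (?v ** matrix_inv t)" by (simp add: matrix_mul_assoc vt mult_tsmult)
  finally have "tsmult (inverse ?b) ?v = tsmult (inverse ?b) (tsmult ?b (?v ** matrix_inv t))" by simp
  then have vi: "?v ** matrix_inv t = tsmult (inverse ?b) ?v"
    using b0 by (simp add: vec_eq_iff tsmult_def)
  show ?thesis unfolding act_def tv mult_tsmult vi weight_w1_wn1_def
    by (simp add: vec_eq_iff tsmult_def)
qed

lemma root_w:
  assumes c: "char2 TYPE('k::field)" and a: "alg_closed TYPE('k)"
  shows "\<exists>w::'k. w \<noteq> 0 \<and> w \<noteq> 1"
proof -
  have "degree [:1,1,1::'k:] \<ge> 1" by simp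
  then obtain w :: 'k where "poly [:1,1,1:] w = 0" using a unfolding alg_closed_def by blast
  then have e: "1 + w * (1 + w) = 0" by simp
  have "w \<noteq> 0" using e by auto
  moreover have "w \<noteq> 1" using e c2[OF c, of 1] by (auto simp: algebra_simps)
  ultimately show ?thesis by blast
qed

theorem lemma8p1:
  assumes "char2 TYPE('k::field)" and "alg_closed TYPE('k)"
    and "CARD('n::{finite,linorder}) \<ge> 2"
  shows "(\<forall>X::'k^'n::{finite,linorder}^'n::{finite,linorder}. bV X X = 0)
    \<and> (even CARD('n::{finite,linorder}) \<longrightarrow>
         (\<forall>X::'k^'n::{finite,linorder}^'n::{finite,linorder}. (\<forall>Y. bV X Y = 0) \<longrightarrow> X = 0) \<and>
         {X::'k^'n::{finite,linorder}^'n::{finite,linorder}. psiV X = 0} = perp span_gamma)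
    \<and> (odd CARD('n::{finite,linorder}) \<longrightarrow>
         (radical :: ('k^'n::{finite,linorder}^'n::{finite,linorder}) set) = span_gamma \<and>
         {X::'k^'n::{finite,linorder}^'n::{finite,linorder}. psiV X = 0} \<inter> span_gamma = {0} \<and>
         (\<forall>Z::'k^'n::{finite,linorder}^'n::{finite,linorder}. \<exists>X Y. psiV X = 0 \<and> Y \<in> span_gamma \<and> Z = X + Y))
    \<and> subquot_is_L (span_gamma :: ('k^'n::{finite,linorder}^'n::{finite,linorder}) set) (perp span_gamma) weight_w1_wn1"
proof -
  note c = assms(1)
  obtain w :: 'k where w: "w \<noteq> 0" "w \<noteq> 1" using root_w[OF assms(1,2)] by blast
  have mm: "Min (UNIV::'n set) < Max UNIV" by (rule minmax[OF assms(3)])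
  define v where "v = (Em (Min UNIV) (Max UNIV) :: 'k^('n::{finite,linorder})^('n::{finite,linorder}))"
  have GU: "Gsubmodule (span_gamma :: ('k^('n::{finite,linorder})^('n::{finite,linorder})) set)" by (rule Gsub_U)
  have GW: "Gsubmodule (perp span_gamma :: ('k^('n::{finite,linorder})^('n::{finite,linorder})) set)"
    unfolding perp_sg by (rule Gsub_W)
  have zU: "(0::'k^('n::{finite,linorder})^('n::{finite,linorder})) \<in> span_gamma"
    using GU unfolding Gsubmodule_def by blast
  have NN: "(of_nat CARD('n) * (1 + of_nat CARD('n)) :: 'k) = 0"
  proof -
    have "(of_nat CARD('n) * (1 + of_nat CARD('n)) :: 'k) = of_nat (CARD('n) * Suc CARD('n))"
      by (simp add: algebra_simps)
    also have "\<dots> = 0" using c2nat[OF c, of "CARD('n) * Suc CARD('n)"] by simp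
    finally show ?thesis .
  qed
  have UW: "(span_gamma :: ('k^('n::{finite,linorder})^('n::{finite,linorder})) set) \<subseteq> perp span_gamma"
  proof
    fix X :: "'k^('n::{finite,linorder})^('n::{finite,linorder})" assume "X \<in> span_gamma"
    then obtain c where X: "X = tsmult c (mat 1)" unfolding span_gamma_def gammaV_I by blast
    have "trace X * (1 + of_nat CARD('n)) = c * (of_nat CARD('n) * (1 + of_nat CARD('n)))"
      unfolding X trace_tsmult trace_I by (simp only: mult.assoc)
    then show "X \<in> perp span_gamma" unfolding perp_sg using NN by simp
  qed
  have vW: "v \<in> perp span_gamma" unfolding perp_sg v_def using mm by (simp add: trace_Em)
  have vU: "v \<notin> span_gamma"
  proof
    assume "v \<in> span_gamma"
    then obtain c where "v = tsmult c (mat 1)" unfolding span_gamma_def gammaV_I by blast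
    then have "v$(Min UNIV)$(Max UNIV) = 0" using mm by (simp add: tsmult_def mat_def)
    moreover have "v$(Min UNIV)$(Max UNIV) = 1" unfolding v_def by (simp add: Em_def)
    ultimately show False by simp
  qed
  have irr: "\<forall>S. Gsubmodule S \<and> span_gamma \<subseteq> S \<and> S \<subseteq> perp span_gamma \<longrightarrow>
      S = span_gamma \<or> S = (perp span_gamma :: ('k^('n::{finite,linorder})^('n::{finite,linorder})) set)"
  proof (intro allI impI)
    fix S :: "('k^('n::{finite,linorder})^('n::{finite,linorder})) set"
    assume H: "Gsubmodule S \<and> span_gamma \<subseteq> S \<and> S \<subseteq> perp span_gamma"
    show "S = span_gamma \<or> S = perp span_gamma"
    proof (cases "S = span_gamma")
      case False
      then show ?thesis using irreducible[OF c w] H by blast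
    qed simp
  qed
  have hu: "\<forall>u\<in>unitri. act u v - v \<in> span_gamma"
  proof
    fix u :: "'k^('n::{finite,linorder})^('n::{finite,linorder})" assume "u \<in> unitri"
    then have "act u v = v" unfolding v_def by (rule hw_unitri[OF _ mm])
    then show "act u v - v \<in> span_gamma" using zU by simp
  qed
  have ht: "\<forall>t\<in>torus. act t v - tsmult (weight_w1_wn1 t) v \<in> span_gamma"
  proof
    fix t :: "'k^('n::{finite,linorder})^('n::{finite,linorder})" assume "t \<in> torus"
    then have "act t v = tsmult (weight_w1_wn1 t) v" unfolding v_def by (rule hw_torus)
    then show "act t v - tsmult (weight_w1_wn1 t) v \<in> span_gamma" using zU by simp
  qed
  have UsW: "(span_gamma :: ('k^('n::{finite,linorder})^('n::{finite,linorder})) set) \<subset> perp span_gamma"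
    using UW vW vU by blast
  have sq: "subquot_is_L (span_gamma :: ('k^('n::{finite,linorder})^('n::{finite,linorder})) set) (perp span_gamma) weight_w1_wn1"
    unfolding subquot_is_L_def
    apply (intro conjI GU GW UsW irr)
    using vW vU hu ht by blast
  show ?thesis
    apply (intro conjI)
       apply (intro allI, rule partI[OF c])
      apply (intro impI, rule partII[OF c], assumption)
     apply (intro impI, rule partIII[OF c], assumption)
    apply (rule sq)
    done
qed

end
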